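(* Let $\bm{\mu}\in X^{\mathcal{L}(\mathcal{T})}$ and let $d_s(\bm{\mu})$ and $\bm{w}^s(\bm{\mu})$ be computed by the recursive formula described in the context (for any admissible choices of $c^*(s)$ and of the arbitrary vectors). Then for every node $s\in S$, \[d_s(\bm{\mu})=\max_{\bm{w}\in\Delta_s}\inf_{\bm{\lambda}\in\mathrm{Alt}_s(\bm{\mu})}\sum_{\ell\in\mathcal{D}(s)}w_\ell d(\mu_\ell,\lambda_\ell),\] and $\bm{w}^s(\bm{\mu})$ attains this maximum.
   Context: $\mathcal{T}$ is a finite rooted tree with node set $S$, root $s_0$, children sets $\mathcal{C}(s)$, leaf set $\mathcal{L}(\mathcal{T})$ (nodes without children), and $\mathcal{D}(s)$ the set of leaves descending from $s$ ($\{s\}$ for a leaf). Internal nodes have labels $L(s)\in\{\text{MAX},\text{MIN}\}$. $X\subseteq\mathbb{R}$ is the mean-parameter set of a one-parameter exponential family, $d(x,y)$ the KL divergence between its members with means $x$ and $y$, $\theta\in X$ a threshold. For $\bm{\lambda}$ with coordinates indexed by (a superset of) $\mathcal{D}(s)$: $V_s(\bm{\lambda})=\lambda_s$ at a leaf, $\max_{c\in\mathcal{C}(s)}V_c(\bm{\lambda})$ if $L(s)=$MAX, $\min_{c}V_c(\bm{\lambda})$ if MIN; $a_s(\bm{\lambda})=$'win' iff $V_s(\bm{\lambda})\ge\theta$, else 'lose'. $\Delta_s=\{(w_\ell)_{\ell\in\mathcal{D}(s)}:w_\ell\ge0,\sum w_\ell=1\}$ and $\mathrm{Alt}_s(\bm{\mu})=\{\bm{\lambda}\in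 X^{\mathcal{D}(s)}:a_s(\bm{\lambda})\neq a_{s_0}(\bm{\mu})\}$. Recursive formula: let $a^*=a_{s_0}(\bm{\mu})$, and $P=$MAX, $Q=$MIN if $a^*=$'win', $P=$MIN, $Q=$MAX if $a^*=$'lose'. Bottom-up: for a leaf $s$: $w^s_s=1$; $d_s=d(\mu_s,\theta)$ if ($a^*=$'win' and $\mu_s\ge\theta$) or ($a^*=$'lose' and $\mu_s<\theta$), otherwise $d_s=0$. If $L(s)=P$: $d_s=\max_{c\in\mathcal{C}(s)}d_c$; choose $c^*(s)\in\arg\max_c d_c$; if $d_s>0$, $w^s_\ell=w^{c^*(s)}_\ell$ for $\ell\in\mathcal{D}(c^*(s))$ and $w^s_\ell=0$ for $\ell\in\mathcal{D}(c)$, $c\ne c^*(s)$. If $L(s)=Q$ and $d_c>0$ for all $c\in\mathcal{C}(s)$: $d_s=1/\sum_{c}(1/d_c)$ and $w^s_\ell=\frac{w^c_\ell/d_c}{\sum_{c'\in\mathcal{C}(s)}1/d_{c'}}$ for $\ell\in\mathcal{D}(c)$, $c\in\mathcal{C}(s)$. If $L(s)=Q$ and some $d_c=0$: $d_s=0$. For any internal $s$ with $d_s=0$, $\bm{w}^s$ is an arbitrary element of $\Delta_s$. (All $d_c,w^c$ are evaluated at $\bm{\mu}$.) *)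

theory Defs
  imports "HOL-Analysis.Analysis"
begin

text \<open>A (regular, nondegenerate) one-parameter exponential family with log-partition
function b on the open natural-parameter interval Theta: densities exp(eta*x - b eta).
b' is the derivative of b (the mean map), which has a positive derivative (the variance).\<close>

definition expfam :: "(real \<Rightarrow> real) \<Rightarrow> (real \<Rightarrow> real) \<Rightarrow> real set \<Rightarrow> bool" where
  "expfam b b' Th \<longleftrightarrow> Th \<noteq> {} \<and> open Th \<and> is_interval Th \<and>
     (\<forall>t\<in>Th. (b has_real_derivative b' t) (at t)) \<and>
     (\<forall>t\<in>Th. \<exists>v>0. (b' has_real_derivative v) (at t))"

definition mean_set :: "(real \<Rightarrow> real) \<Rightarrow> real set \<Rightarrow> real set" where
  "mean_set b' Th = b' ` Th"

text \<open>KL divergence between the members with means x and y: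
  KL(P_eta(x) || P_eta(y)) = (eta x - eta y) * x - b(eta x) + b(eta y).\<close>
definition KL :: "(real \<Rightarrow> real) \<Rightarrow> (real \<Rightarrow> real) \<Rightarrow> real set \<Rightarrow> real \<Rightarrow> real \<Rightarrow> real" where
  "KL b b' Th x y = (let eta = inv_into Th b' in
      (eta x - eta y) * x - b (eta x) + b (eta y))"

datatype label = LMAX | LMIN

datatype 'l gtree = Leaf 'l | Node label "'l gtree list"

fun leaves :: "'l gtree \<Rightarrow> 'l list" where
  "leaves (Leaf l) = [l]"
| "leaves (Node a cs) = concat (map leaves cs)"

abbreviation desc :: "'l gtree \<Rightarrow> 'l set" where
  "desc s \<equiv> set (leaves s)"

fun wf_tree :: "'l gtree \<Rightarrow> bool" where
  "wf_tree (Leaf l) = True"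
| "wf_tree (Node a cs) = (cs \<noteq> [] \<and> (\<forall>c\<in>set cs. wf_tree c))"

text \<open>the node set S of a tree: all its subtrees\<close>
fun subtrees :: "'l gtree \<Rightarrow> 'l gtree set" where
  "subtrees (Leaf l) = {Leaf l}"
| "subtrees (Node a cs) = insert (Node a cs) (\<Union>c\<in>set cs. subtrees c)"

fun val :: "'l gtree \<Rightarrow> ('l \<Rightarrow> real) \<Rightarrow> real" where
  "val (Leaf l) lam = lam l"
| "val (Node LMAX cs) lam = Max (set (map (\<lambda>c. val c lam) cs))"
| "val (Node LMIN cs) lam = Min (set (map (\<lambda>c. val c lam) cs))"

text \<open>a_s(lambda) = 'win' is encoded as True, 'lose' as False\<close>
definition wins :: "real \<Rightarrow> 'l gtree \<Rightarrow> ('l \<Rightarrow> real) \<Rightarrow> bool" where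
  "wins th s lam \<longleftrightarrow> th \<le> val s lam"

text \<open>Delta_s (vectors indexed by D(s); values outside D(s) are irrelevant)\<close>
definition tsimplex :: "'l gtree \<Rightarrow> ('l \<Rightarrow> real) set" where
  "tsimplex s = {w. (\<forall>l\<in>desc s. 0 \<le> w l) \<and> (\<Sum>l\<in>desc s. w l) = 1}"

text \<open>Alt_s(mu), given astar = a_{s0}(mu)\<close>
definition Alt :: "real set \<Rightarrow> real \<Rightarrow> bool \<Rightarrow> 'l gtree \<Rightarrow> ('l \<Rightarrow> real) set" where
  "Alt X th astar s = {lam. (\<forall>l\<in>desc s. lam l \<in> X) \<and> wins th s lam \<noteq> astar}"

definition objective :: "(real \<Rightarrow> real \<Rightarrow> real) \<Rightarrow> real set \<Rightarrow> real \<Rightarrow> bool \<Rightarrow> ('l \<Rightarrow> real)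
    \<Rightarrow> 'l gtree \<Rightarrow> ('l \<Rightarrow> real) \<Rightarrow> real" where
  "objective d X th astar mu s w =
     Inf ((\<lambda>lam. \<Sum>l\<in>desc s. w l * d (mu l) (lam l)) ` Alt X th astar s)"

section \<open>The recursive formula (relational: it allows every admissible choice)\<close>

text \<open>rec_dw d th mu astar s ds ws: (ds, ws) is a possible outcome of the recursive
  formula at node s, with P = MAX if astar ('win') and P = MIN otherwise.\<close>
inductive rec_dw :: "(real \<Rightarrow> real \<Rightarrow> real) \<Rightarrow> real \<Rightarrow> ('l \<Rightarrow> real) \<Rightarrow> bool
    \<Rightarrow> 'l gtree \<Rightarrow> real \<Rightarrow> ('l \<Rightarrow> real) \<Rightarrow> bool"
  for d th mu astar where
  leaf: "rec_dw d th mu astar (Leaf l)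
           (if (astar \<and> th \<le> mu l) \<or> (\<not> astar \<and> mu l < th) then d (mu l) th else 0)
           (\<lambda>m. if m = l then 1 else 0)"
| P_pos: "\<lbrakk> L = (if astar then LMAX else LMIN);
            list_all2 (\<lambda>c r. rec_dw d th mu astar c (fst r) (snd r)) cs rs;
            i < length cs;
            fst (rs ! i) = Max (fst ` set rs);
            fst (rs ! i) > 0;
            \<forall>j<length cs. \<forall>l\<in>desc (cs ! j). w l = (if j = i then snd (rs ! i) l else 0) \<rbrakk>
          \<Longrightarrow> rec_dw d th mu astar (Node L cs) (fst (rs ! i)) w"
| P_zero: "\<lbrakk> L = (if astar then LMAX else LMIN);
            list_all2 (\<lambda>c r. rec_dw d th mu astar c (fst r) (snd r)) cs rs;
            Max (fst ` set rs) = 0;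
            w \<in> tsimplex (Node L cs) \<rbrakk>
          \<Longrightarrow> rec_dw d th mu astar (Node L cs) 0 w"
| Q_pos: "\<lbrakk> L = (if astar then LMIN else LMAX);
            list_all2 (\<lambda>c r. rec_dw d th mu astar c (fst r) (snd r)) cs rs;
            \<forall>r\<in>set rs. fst r > 0;
            H = (\<Sum>r\<leftarrow>rs. 1 / fst r);
            \<forall>j<length cs. \<forall>l\<in>desc (cs ! j). w l = (snd (rs ! j) l / fst (rs ! j)) / H \<rbrakk>
          \<Longrightarrow> rec_dw d th mu astar (Node L cs) (1 / H) w"
| Q_zero: "\<lbrakk> L = (if astar then LMIN else LMAX);
            list_all2 (\<lambda>c r. rec_dw d th mu astar c (fst r) (snd r)) cs rs;
            \<exists>r\<in>set rs. fst r = 0;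
            w \<in> tsimplex (Node L cs) \<rbrakk>
          \<Longrightarrow> rec_dw d th mu astar (Node L cs) 0 w"

end

theory Submission
  imports Defs
begin

lemma ef_interval:
  assumes "expfam b b' Th" "s \<in> Th" "t \<in> Th" "s \<le> u" "u \<le> t"
  shows "u \<in> Th"
  using assms unfolding expfam_def is_interval_1 by blast

lemma ef_mono:
  assumes ef: "expfam b b' Th" and "s \<in> Th" "t \<in> Th" "s < t"
  shows "b' s < b' t"
proof (rule DERIV_pos_imp_increasing[OF \<open>s < t\<close>])
  fix x assume "s \<le> x" "x \<le> t"
  then have "x \<in> Th" using ef_interval[OF ef] assms by blast
  then show "\<exists>y. DERIV b' x :> y \<and> 0 < y" using ef unfolding expfam_def by blast
qed

lemma ef_mono_le:
  assumes ef: "expfam b b' Th" and "s \<in> Th" "t \<in> Th" "s \<le> t"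
  shows "b' s \<le> b' t"
  using ef_mono[OF assms(1-3)] assms(4) by (cases "s = t") auto

lemma ef_inj: "expfam b b' Th \<Longrightarrow> inj_on b' Th"
  by (metis ef_mono inj_onI linorder_neqE_linordered_idom order_less_irrefl)

lemma eta_in: "x \<in> mean_set b' Th \<Longrightarrow> inv_into Th b' x \<in> Th"
  unfolding mean_set_def by (simp add: inv_into_into)

lemma eta_inv: "x \<in> mean_set b' Th \<Longrightarrow> b' (inv_into Th b' x) = x"
  unfolding mean_set_def by (simp add: f_inv_into_f)

lemma eta_b': "expfam b b' Th \<Longrightarrow> t \<in> Th \<Longrightarrow> inv_into Th b' (b' t) = t"
  by (simp add: ef_inj inv_into_f_f)

lemma eta_mono:
  assumes ef: "expfam b b' Th" and x: "x \<in> mean_set b' Th" and y: "y \<in> mean_set b' Th" and "x \<le> y"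
  shows "inv_into Th b' x \<le> inv_into Th b' y"
proof (rule ccontr)
  assume "\<not> ?thesis"
  then have "b' (inv_into Th b' y) < b' (inv_into Th b' x)"
    using ef_mono[OF ef eta_in[OF y] eta_in[OF x]] by simp
  then show False using eta_inv[OF x] eta_inv[OF y] \<open>x \<le> y\<close> by simp
qed

lemma KL_phi: "KL b b' Th x y = (b (inv_into Th b' y) - inv_into Th b' y * x) - (b (inv_into Th b' x) - inv_into Th b' x * x)"
  unfolding KL_def Let_def by (simp add: algebra_simps)

lemma phi_dec:
  assumes ef: "expfam b b' Th" and x: "x \<in> mean_set b' Th" and t1: "t1 \<in> Th"
    and "t1 \<le> t2" "t2 \<le> inv_into Th b' x"
  shows "b t2 - t2 * x \<le> b t1 - t1 * x"
proof (rule DERIV_nonpos_imp_nonincreasing[OF \<open>t1 \<le> t2\<close>])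
  fix u assume u: "t1 \<le> u" "u \<le> t2"
  then have uT: "u \<in> Th" using ef_interval[OF ef t1 eta_in[OF x]] assms by auto
  have "(b has_real_derivative b' u) (at u)" using ef uT unfolding expfam_def by blast
  then have "((\<lambda>t. b t - t * x) has_real_derivative b' u - 1 * x) (at u)"
    by (auto intro!: derivative_eq_intros)
  moreover have "b' u \<le> x"
    using ef_mono_le[OF ef uT eta_in[OF x]] u assms eta_inv[OF x] by simp
  ultimately show "\<exists>y. ((\<lambda>t. b t - t * x) has_real_derivative y) (at u) \<and> y \<le> 0" by force
qed

lemma phi_inc:
  assumes ef: "expfam b b' Th" and x: "x \<in> mean_set b' Th" and t2: "t2 \<in> Th"
    and "t1 \<le> t2" "inv_into Th b' x \<le> t1"
  shows "b t1 - t1 * x \<le> b t2 - t2 * x"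
proof (rule DERIV_nonneg_imp_nondecreasing[OF \<open>t1 \<le> t2\<close>])
  fix u assume u: "t1 \<le> u" "u \<le> t2"
  then have uT: "u \<in> Th" using ef_interval[OF ef eta_in[OF x] t2] assms by auto
  have "(b has_real_derivative b' u) (at u)" using ef uT unfolding expfam_def by blast
  then have "((\<lambda>t. b t - t * x) has_real_derivative b' u - 1 * x) (at u)"
    by (auto intro!: derivative_eq_intros)
  moreover have "x \<le> b' u"
    using ef_mono_le[OF ef eta_in[OF x] uT] u assms eta_inv[OF x] by simp
  ultimately show "\<exists>y. ((\<lambda>t. b t - t * x) has_real_derivative y) (at u) \<and> y \<ge> 0" by force
qed

lemma KL_self: "KL b b' Th x x = 0"
  unfolding KL_def Let_def by simp

lemma KL_below:
  assumes ef: "expfam b b' Th" and x: "x \<in> mean_set b' Th" and y: "y \<in> mean_set b' Th"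
    and z: "z \<in> mean_set b' Th" and "y \<le> z" "z \<le> x"
  shows "KL b b' Th x z \<le> KL b b' Th x y"
  unfolding KL_phi
  using phi_dec[OF ef x eta_in[OF y] eta_mono[OF ef y z] eta_mono[OF ef z x]] assms by simp

lemma KL_above:
  assumes ef: "expfam b b' Th" and x: "x \<in> mean_set b' Th" and y: "y \<in> mean_set b' Th"
    and z: "z \<in> mean_set b' Th" and "x \<le> y" "y \<le> z"
  shows "KL b b' Th x y \<le> KL b b' Th x z"
  unfolding KL_phi
  using phi_inc[OF ef x eta_in[OF z] eta_mono[OF ef y z] eta_mono[OF ef x y]] assms by simp

lemma KL_nonneg:
  assumes ef: "expfam b b' Th" and x: "x \<in> mean_set b' Th" and y: "y \<in> mean_set b' Th"
  shows "0 \<le> KL b b' Th x y"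
proof (cases "y \<le> x")
  case True then show ?thesis using KL_below[OF ef x y x] KL_self x by (metis order_refl)
next
  case False then show ?thesis using KL_above[OF ef x x y] KL_self x by (metis order_refl nle_le)
qed

lemma KL_leftcont:
  assumes ef: "expfam b b' Th" and x: "x \<in> mean_set b' Th" and th: "th \<in> mean_set b' Th"
    and "e > 0"
  shows "\<exists>y\<in>mean_set b' Th. y < th \<and> KL b b' Th x y < KL b b' Th x th + e"
proof -
  define t0 where "t0 = inv_into Th b' th"
  have t0: "t0 \<in> Th" using eta_in[OF th] t0_def by simp
  define phi where "phi = (\<lambda>t. b t - t * x)"
  have "(b has_real_derivative b' t0) (at t0)" using ef t0 unfolding expfam_def by blast
  then have "isCont b t0" by (rule DERIV_isCont)
  then have "isCont phi t0" unfolding phi_def by (auto intro!: continuous_intros)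
  then obtain dl where dl: "dl > 0" "\<forall>t. dist t t0 < dl \<longrightarrow> dist (phi t) (phi t0) < e"
    using \<open>e > 0\<close> unfolding continuous_at_eps_delta by blast
  obtain r where r: "r > 0" "ball t0 r \<subseteq> Th"
    using ef t0 unfolding expfam_def by (meson openE)
  define t where "t = t0 - min dl r / 2"
  have tT: "t \<in> Th" using r dl unfolding t_def by (auto simp: dist_real_def)
  have tt0: "t < t0" using r dl unfolding t_def by auto
  have "dist (phi t) (phi t0) < e" using dl r unfolding t_def by (auto simp: dist_real_def)
  define y where "y = b' t"
  have y: "y \<in> mean_set b' Th" unfolding y_def mean_set_def using tT by simp
  have "y < th" unfolding y_def using ef_mono[OF ef tT t0 tt0] eta_inv[OF th] t0_def by simp
  moreover have "inv_into Th b' y = t" unfolding y_def using eta_b'[OF ef tT] .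
  ultimately show ?thesis using y \<open>dist (phi t) (phi t0) < e\<close>
    unfolding KL_phi phi_def t0_def dist_real_def by (intro bexI[of _ y]) auto
qed

definition dleaf :: "(real \<Rightarrow> real \<Rightarrow> real) \<Rightarrow> real \<Rightarrow> ('l \<Rightarrow> real) \<Rightarrow> bool \<Rightarrow> 'l \<Rightarrow> real" where
  "dleaf d th mu astar l = (if (astar \<and> th \<le> mu l) \<or> (\<not> astar \<and> mu l < th) then d (mu l) th else 0)"

fun gval :: "(real \<Rightarrow> real \<Rightarrow> real) \<Rightarrow> real \<Rightarrow> ('l \<Rightarrow> real) \<Rightarrow> bool \<Rightarrow> 'l gtree \<Rightarrow> ('l \<Rightarrow> real) \<Rightarrow> real" where
  "gval d th mu astar (Leaf l) w = w l * dleaf d th mu astar l"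
| "gval d th mu astar (Node L cs) w = (if L = (if astar then LMAX else LMIN)
      then sum_list (map (\<lambda>c. gval d th mu astar c w) cs)
      else Min (set (map (\<lambda>c. gval d th mu astar c w) cs)))"

lemma gval_cong: "(\<forall>l\<in>desc s. w l = w' l) \<Longrightarrow> gval d th mu astar s w = gval d th mu astar s w'"
proof (induction s)
  case (Leaf x) then show ?case by simp
next
  case (Node L cs)
  have "map (\<lambda>c. gval d th mu astar c w) cs = map (\<lambda>c. gval d th mu astar c w') cs"
    using Node by auto
  then show ?case by (simp only: gval.simps)
qed

lemma gval_nonneg: "wf_tree s \<Longrightarrow> (\<forall>l\<in>desc s. 0 \<le> w l \<and> 0 \<le> dleaf d th mu astar l) \<Longrightarrow> 0 \<le> gval d th mu astar s w"
proof (induction s)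
  case (Leaf x) then show ?case by simp
next
  case (Node L cs)
  have "\<forall>c\<in>set cs. 0 \<le> gval d th mu astar c w" using Node by auto
  then show ?case using Node.prems by (auto intro!: sum_list_nonneg)
qed

lemma gval_hom: "wf_tree s \<Longrightarrow> 0 \<le> a \<Longrightarrow> gval d th mu astar s (\<lambda>l. a * w l) = a * gval d th mu astar s w"
proof (induction s)
  case (Leaf x) then show ?case by simp
next
  case (Node L cs)
  have m: "map (\<lambda>c. gval d th mu astar c (\<lambda>l. a * w l)) cs = map (\<lambda>c. a * gval d th mu astar c w) cs"
    using Node by auto
  have "Min (set (map (\<lambda>c. a * gval d th mu astar c w) cs)) = a * Min (set (map (\<lambda>c. gval d th mu astar c w) cs))"
  proof -
    have "set (map (\<lambda>c. a * gval d th mu astar c w) cs) = (\<lambda>x. a * x) ` set (map (\<lambda>c. gval d th mu astar c w) cs)"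
      by auto
    moreover have "a * Min (set (map (\<lambda>c. gval d th mu astar c w) cs)) = Min ((\<lambda>x. a * x) ` set (map (\<lambda>c. gval d th mu astar c w) cs))"
      using Node.prems by (intro hom_Min_commute) (auto simp: min_mult_distrib_left)
    ultimately show ?thesis by simp
  qed
  moreover have "sum_list (map (\<lambda>c. a * gval d th mu astar c w) cs) = a * sum_list (map (\<lambda>c. gval d th mu astar c w) cs)"
    by (simp add: sum_list_const_mult)
  ultimately show ?case unfolding gval.simps m by (cases "L = (if astar then LMAX else LMIN)") (simp_all only: if_True if_False simp_thms)
qed

lemma distinct_concat_disj:
  "distinct (concat xss) \<Longrightarrow> i < length xss \<Longrightarrow> j < length xss \<Longrightarrow> i \<noteq> j \<Longrightarrow> set (xss ! i) \<inter> set (xss ! j) = {}"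
proof (induction xss arbitrary: i j)
  case Nil then show ?case by simp
next
  case (Cons xs xss)
  show ?case
  proof (cases i)
    case 0
    then obtain j' where j': "j = Suc j'" using Cons by (cases j) auto
    then have "xss ! j' \<in> set xss" using Cons by simp
    then have "set (xss ! j') \<subseteq> set (concat xss)" by auto
    moreover have "set xs \<inter> set (concat xss) = {}" using Cons.prems by simp
    ultimately show ?thesis using 0 j' by auto
  next
    case (Suc i')
    show ?thesis
    proof (cases j)
      case 0
      then have "xss ! i' \<in> set xss" using Cons Suc by simp
      then have "set (xss ! i') \<subseteq> set (concat xss)" by auto
      moreover have "set xs \<inter> set (concat xss) = {}" using Cons.prems by simp
      ultimately show ?thesis using 0 Suc by auto
    next
      case (Suc j') then show ?thesis using Cons \<open>i = Suc i'\<close> by auto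
    qed
  qed
qed

lemma sum_desc_node:
  assumes "distinct (leaves (Node L cs))"
  shows "sum w (desc (Node L cs)) = (\<Sum>j<length cs. sum w (desc (cs ! j)))"
proof -
  have dc: "distinct (concat (map leaves cs))" using assms by simp
  have "sum w (desc (Node L cs)) = sum_list (map w (concat (map leaves cs)))"
    using dc sum.distinct_set_conv_list[OF dc, of w] by simp
  also have "\<dots> = sum_list (map (\<lambda>c. sum_list (map w (leaves c))) cs)"
    by (induction cs) auto
  also have "\<dots> = sum_list (map (\<lambda>c. sum w (desc c)) cs)"
  proof -
    have "\<forall>c\<in>set cs. distinct (leaves c)" using dc by (simp add: distinct_concat_iff)
    then have "map (\<lambda>c. sum_list (map w (leaves c))) cs = map (\<lambda>c. sum w (desc c)) cs"
      by (auto simp: sum.distinct_set_conv_list)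
    then show ?thesis by (rule arg_cong[where f=sum_list])
  qed
  also have "\<dots> = (\<Sum>j<length cs. sum w (desc (cs ! j)))"
    by (simp add: sum_list_sum_nth atLeast0LessThan)
  finally show ?thesis .
qed

lemma node_facts:
  assumes "wf_tree (Node L cs)" "distinct (leaves (Node L cs))" "j < length cs"
  shows "wf_tree (cs ! j)" "distinct (leaves (cs ! j))" "desc (cs ! j) \<subseteq> desc (Node L cs)"
proof -
  show "wf_tree (cs ! j)" using assms by auto
  have dc: "distinct (concat (map leaves cs))" using assms by simp
  show "distinct (leaves (cs ! j))" using dc assms(3) by (simp add: distinct_concat_iff)
  show "desc (cs ! j) \<subseteq> desc (Node L cs)" using assms(3) nth_mem by fastforce
qed

lemma node_disj:
  assumes "distinct (leaves (Node L cs))" "j < length cs" "k < length cs" "j \<noteq> k"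
  shows "desc (cs ! j) \<inter> desc (cs ! k) = {}"
  using distinct_concat_disj[of "map leaves cs" j k] assms by simp

lemma desc_node: "l \<in> desc (Node L cs) \<longleftrightarrow> (\<exists>j<length cs. l \<in> desc (cs ! j))"
proof -
  have "desc (Node L cs) = (\<Union>c\<in>set cs. desc c)" by simp
  then show ?thesis by (metis UN_iff in_set_conv_nth)
qed

lemma gval_node_sum: "gval d th mu astar (Node L cs) w = (if L = (if astar then LMAX else LMIN)
      then (\<Sum>j<length cs. gval d th mu astar (cs ! j) w)
      else Min ((\<lambda>j. gval d th mu astar (cs ! j) w) ` {..<length cs}))"
proof -
  have "set (map (\<lambda>c. gval d th mu astar c w) cs) = (\<lambda>j. gval d th mu astar (cs ! j) w) ` {..<length cs}"
    by (force simp: in_set_conv_nth)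
  then show ?thesis by (simp add: sum_list_sum_nth atLeast0LessThan)
qed

definition IHP where
  "IHP d th mu astar s ds ws \<longleftrightarrow> (wf_tree s \<longrightarrow> distinct (leaves s) \<longrightarrow> (\<forall>l\<in>desc s. 0 \<le> dleaf d th mu astar l) \<longrightarrow>
     ws \<in> tsimplex s \<and> gval d th mu astar s ws = ds \<and>
     (\<forall>w::_ \<Rightarrow> real. (\<forall>l\<in>desc s. 0 \<le> w l) \<longrightarrow> gval d th mu astar s w \<le> ds * sum w (desc s)) \<and> 0 \<le> ds)"

lemma children_IH:
  assumes "list_all2 (\<lambda>c r. rec_dw d th mu astar c (fst r) (snd r) \<and> IHP d th mu astar c (fst r) (snd r)) cs rs"
    and "wf_tree (Node L cs)" "distinct (leaves (Node L cs))" "\<forall>l\<in>desc (Node L cs). 0 \<le> dleaf d th mu astar l"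
  shows "length rs = length cs" "cs \<noteq> []"
    "\<And>j. j < length cs \<Longrightarrow> snd (rs ! j) \<in> tsimplex (cs ! j)"
    "\<And>j. j < length cs \<Longrightarrow> gval d th mu astar (cs ! j) (snd (rs ! j)) = fst (rs ! j)"
    "\<And>j (w :: _ \<Rightarrow> real). j < length cs \<Longrightarrow> \<forall>l\<in>desc (cs ! j). 0 \<le> w l \<Longrightarrow> gval d th mu astar (cs ! j) w \<le> fst (rs ! j) * sum w (desc (cs ! j))"
    "\<And>j. j < length cs \<Longrightarrow> 0 \<le> fst (rs ! j)"
proof -
  show "length rs = length cs" using assms(1) by (simp add: list_all2_lengthD)
  show "cs \<noteq> []" using assms(2) by simp
  have H: "snd (rs ! j) \<in> tsimplex (cs ! j) \<and> gval d th mu astar (cs ! j) (snd (rs ! j)) = fst (rs ! j) \<and>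
     (\<forall>w. (\<forall>l\<in>desc (cs ! j). 0 \<le> w l) \<longrightarrow> gval d th mu astar (cs ! j) w \<le> fst (rs ! j) * sum w (desc (cs ! j))) \<and> 0 \<le> fst (rs ! j)"
    if j: "j < length cs" for j
  proof -
    have "IHP d th mu astar (cs ! j) (fst (rs ! j)) (snd (rs ! j))"
      using assms(1) j by (simp add: list_all2_conv_all_nth)
    moreover note node_facts[OF assms(2,3) j]
    ultimately show ?thesis
      using assms(4) unfolding IHP_def by blast
  qed
  fix j :: nat and w :: "_ \<Rightarrow> real" assume j: "j < length cs"
  show "snd (rs ! j) \<in> tsimplex (cs ! j)" using H[OF j] by (rule conjunct1)
  show "gval d th mu astar (cs ! j) (snd (rs ! j)) = fst (rs ! j)" using H[OF j] by (metis conjunct1 conjunct2)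
  show "0 \<le> fst (rs ! j)" using H[OF j] by (metis conjunct2)
  assume "\<forall>l\<in>desc (cs ! j). 0 \<le> w l"
  then show "gval d th mu astar (cs ! j) w \<le> fst (rs ! j) * sum w (desc (cs ! j))"
    using H[OF j] by (metis conjunct1 conjunct2)
qed

lemma main_rec:
  assumes "rec_dw d th mu astar s ds ws"
  shows "IHP d th mu astar s ds ws"
  using assms
proof (induction rule: rec_dw.induct)
  case (leaf l)
  show ?case unfolding IHP_def tsimplex_def dleaf_def[symmetric] by (auto simp: mult.commute)
next
  case (P_pos L cs rs i w)
  show ?case unfolding IHP_def
  proof (intro impI)
    assume wf: "wf_tree (Node L cs)" and dis: "distinct (leaves (Node L cs))"
      and dp: "\<forall>l\<in>desc (Node L cs). 0 \<le> dleaf d th mu astar l"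
    note CH = children_IH[OF P_pos.IH wf dis dp]
    let ?n = "length cs"
    let ?g = "gval d th mu astar"
    have Dmax: "fst (rs ! j) \<le> fst (rs ! i)" if "j < ?n" for j
    proof -
      have "fst (rs ! j) \<in> fst ` set rs" using that CH(1) by simp
      then have "fst (rs ! j) \<le> Max (fst ` set rs)" by (intro Max_ge) auto
      then show ?thesis using P_pos.hyps(3) by simp
    qed
    have IHi1: "snd (rs ! i) \<in> tsimplex (cs ! i)" by (rule CH(3)[OF P_pos.hyps(2)])
    have IHi2: "?g (cs ! i) (snd (rs ! i)) = fst (rs ! i)" by (rule CH(4)[OF P_pos.hyps(2)])
    note IHi = IHi1 IHi2
    have wnn: "\<forall>l\<in>desc (Node L cs). 0 \<le> w l"
    proof
      fix l assume "l \<in> desc (Node L cs)"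
      from iffD1[OF desc_node this] obtain j where j: "j < ?n" "l \<in> desc (cs ! j)" by blast
      have "w l = (if j = i then snd (rs ! i) l else 0)" by (rule P_pos.hyps(5)[rule_format, OF j])
      moreover have "l \<in> desc (cs ! i) \<Longrightarrow> 0 \<le> snd (rs ! i) l" using IHi(1) unfolding tsimplex_def by blast
      ultimately show "0 \<le> w l" using j by (cases "j = i") auto
    qed
    have mw: "sum w (desc (cs ! j)) = (if j = i then 1 else 0)" if "j < ?n" for j
    proof -
      have "sum w (desc (cs ! j)) = sum (\<lambda>l. if j = i then snd (rs ! i) l else 0) (desc (cs ! j))"
        by (rule sum.cong[OF refl]) (rule P_pos.hyps(5)[rule_format, OF that])
      then show ?thesis using IHi(1) unfolding tsimplex_def by (cases "j = i") simp_all
    qed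
    have "sum w (desc (Node L cs)) = (\<Sum>j<?n. if j = i then 1 else 0)"
      unfolding sum_desc_node[OF dis] using mw by simp
    also have "\<dots> = 1" using P_pos.hyps(2) by simp
    finally have s1: "w \<in> tsimplex (Node L cs)" using wnn unfolding tsimplex_def by simp
    have gj: "?g (cs ! j) w = (if j = i then fst (rs ! i) else 0)" if j: "j < ?n" for j
    proof (cases "j = i")
      case True
      have "\<forall>l\<in>desc (cs ! j). w l = snd (rs ! i) l" using P_pos.hyps(5)[rule_format, OF j] True by simp
      then have "?g (cs ! j) w = ?g (cs ! j) (snd (rs ! i))" by (rule gval_cong)
      then have "?g (cs ! j) w = ?g (cs ! i) (snd (rs ! i))" using True by simp
      then show ?thesis using IHi True by simp
    next
      case False
      have nn: "\<forall>l\<in>desc (cs ! j). 0 \<le> w l" using wnn node_facts(3)[OF wf dis j] by blast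
      then have "?g (cs ! j) w \<le> fst (rs ! j) * sum w (desc (cs ! j))" by (rule CH(5)[OF j])
      then have "?g (cs ! j) w \<le> 0" using mw[OF j] False by simp
      moreover have "\<forall>l\<in>desc (cs ! j). 0 \<le> w l \<and> 0 \<le> dleaf d th mu astar l"
        using nn dp node_facts(3)[OF wf dis j] by blast
      then have "0 \<le> ?g (cs ! j) w" by (rule gval_nonneg[OF node_facts(1)[OF wf dis j]])
      ultimately show ?thesis using False by simp
    qed
    have gw: "?g (Node L cs) w = fst (rs ! i)"
      unfolding gval_node_sum using P_pos.hyps(1,2) gj by simp
    have ub: "?g (Node L cs) w' \<le> fst (rs ! i) * sum w' (desc (Node L cs))"
      if nn: "\<forall>l\<in>desc (Node L cs). 0 \<le> w' l" for w'
    proof -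
      have "?g (Node L cs) w' = (\<Sum>j<?n. ?g (cs ! j) w')"
        unfolding gval_node_sum using P_pos.hyps(1) by simp
      also have "\<dots> \<le> (\<Sum>j<?n. fst (rs ! i) * sum w' (desc (cs ! j)))"
      proof (rule sum_mono)
        fix j assume "j \<in> {..<?n}"
        then have j: "j < ?n" by simp
        have nnj: "\<forall>l\<in>desc (cs ! j). 0 \<le> w' l" using nn node_facts(3)[OF wf dis j] by blast
        then have "?g (cs ! j) w' \<le> fst (rs ! j) * sum w' (desc (cs ! j))" by (rule CH(5)[OF j])
        also have "\<dots> \<le> fst (rs ! i) * sum w' (desc (cs ! j))"
          using Dmax[OF j] nnj by (intro mult_right_mono sum_nonneg) auto
        finally show "?g (cs ! j) w' \<le> fst (rs ! i) * sum w' (desc (cs ! j))" .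
      qed
      also have "\<dots> = fst (rs ! i) * sum w' (desc (Node L cs))"
        unfolding sum_desc_node[OF dis] by (simp add: sum_distrib_left)
      finally show ?thesis .
    qed
    show "w \<in> tsimplex (Node L cs) \<and> ?g (Node L cs) w = fst (rs ! i) \<and>
      (\<forall>w'. (\<forall>l\<in>desc (Node L cs). 0 \<le> w' l) \<longrightarrow> ?g (Node L cs) w' \<le> fst (rs ! i) * sum w' (desc (Node L cs))) \<and>
      0 \<le> fst (rs ! i)"
      using s1 gw ub P_pos.hyps(4) by auto
  qed
next
  case (P_zero L cs rs w)
  show ?case unfolding IHP_def
  proof (intro impI)
    assume wf: "wf_tree (Node L cs)" and dis: "distinct (leaves (Node L cs))"
      and dp: "\<forall>l\<in>desc (Node L cs). 0 \<le> dleaf d th mu astar l"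
    note CH = children_IH[OF P_zero.IH wf dis dp]
    let ?n = "length cs"
    let ?g = "gval d th mu astar"
    have D0: "fst (rs ! j) = 0" if "j < ?n" for j
    proof -
      have "fst (rs ! j) \<in> fst ` set rs" using that CH(1) by simp
      then have "fst (rs ! j) \<le> Max (fst ` set rs)" by (intro Max_ge) auto
      then have "fst (rs ! j) \<le> 0" using P_zero.hyps(2) by simp
      then show ?thesis using CH(6)[OF that] by simp
    qed
    have ub: "?g (Node L cs) w' \<le> 0 * sum w' (desc (Node L cs))"
      if nn: "\<forall>l\<in>desc (Node L cs). 0 \<le> w' l" for w'
    proof -
      have "?g (Node L cs) w' = (\<Sum>j<?n. ?g (cs ! j) w')"
        unfolding gval_node_sum using P_zero.hyps(1) by simp
      also have "\<dots> \<le> (\<Sum>j<?n. 0)"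
      proof (rule sum_mono)
        fix j assume "j \<in> {..<?n}"
        then have j: "j < ?n" by simp
        have nnj: "\<forall>l\<in>desc (cs ! j). 0 \<le> w' l" using nn node_facts(3)[OF wf dis j] by blast
        then show "?g (cs ! j) w' \<le> 0" using CH(5)[OF j] D0[OF j] by simp
      qed
      finally show ?thesis by simp
    qed
    have wnn: "\<forall>l\<in>desc (Node L cs). 0 \<le> w l" using P_zero.hyps(3) unfolding tsimplex_def by blast
    have "0 \<le> ?g (Node L cs) w" using gval_nonneg[OF wf] wnn dp by blast
    then have gw: "?g (Node L cs) w = 0" using ub[OF wnn] by simp
    show "w \<in> tsimplex (Node L cs) \<and> ?g (Node L cs) w = 0 \<and>
      (\<forall>w'. (\<forall>l\<in>desc (Node L cs). 0 \<le> w' l) \<longrightarrow> ?g (Node L cs) w' \<le> 0 * sum w' (desc (Node L cs))) \<and>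
      0 \<le> (0::real)"
      using P_zero.hyps(3) gw ub by auto
  qed
next
  case (Q_pos L cs rs H w)
  show ?case unfolding IHP_def
  proof (intro impI)
    assume wf: "wf_tree (Node L cs)" and dis: "distinct (leaves (Node L cs))"
      and dp: "\<forall>l\<in>desc (Node L cs). 0 \<le> dleaf d th mu astar l"
    note CH = children_IH[OF Q_pos.IH wf dis dp]
    let ?n = "length cs"
    let ?g = "gval d th mu astar"
    have LQ: "L \<noteq> (if astar then LMAX else LMIN)" using Q_pos.hyps(1) by simp
    have Dpos: "0 < fst (rs ! j)" if "j < ?n" for j
      using Q_pos.hyps(2) that CH(1) by simp
    have Hs: "H = (\<Sum>j<?n. 1 / fst (rs ! j))"
      unfolding Q_pos.hyps(3) using CH(1) by (simp add: sum_list_sum_nth atLeast0LessThan)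
    have Hpos: "0 < H" unfolding Hs
      using CH(2) Dpos by (intro sum_pos) auto
    have wj: "w l = (1 / (fst (rs ! j) * H)) * snd (rs ! j) l" if "j < ?n" "l \<in> desc (cs ! j)" for j l
      using Q_pos.hyps(4)[rule_format, OF that] by simp
    have wnn: "\<forall>l\<in>desc (Node L cs). 0 \<le> w l"
    proof
      fix l assume "l \<in> desc (Node L cs)"
      from iffD1[OF desc_node this] obtain j where j: "j < ?n" "l \<in> desc (cs ! j)" by blast
      have "0 \<le> snd (rs ! j) l" using CH(3)[OF j(1)] j(2) unfolding tsimplex_def by blast
      then show "0 \<le> w l" using wj[OF j] Dpos[OF j(1)] Hpos by simp
    qed
    have mw: "sum w (desc (cs ! j)) = 1 / (fst (rs ! j) * H)" if j: "j < ?n" for j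
    proof -
      have "sum w (desc (cs ! j)) = sum (\<lambda>l. (1 / (fst (rs ! j) * H)) * snd (rs ! j) l) (desc (cs ! j))"
        by (rule sum.cong[OF refl]) (rule wj[OF j])
      also have "\<dots> = (1 / (fst (rs ! j) * H)) * sum (snd (rs ! j)) (desc (cs ! j))"
        by (simp add: sum_distrib_left)
      finally show ?thesis using CH(3)[OF j] unfolding tsimplex_def by simp
    qed
    have "sum w (desc (Node L cs)) = (\<Sum>j<?n. 1 / fst (rs ! j)) / H"
      unfolding sum_desc_node[OF dis] using mw by (simp add: sum_divide_distrib)
    also have "\<dots> = 1" using Hs Hpos by simp
    finally have s1: "w \<in> tsimplex (Node L cs)" using wnn unfolding tsimplex_def by simp
    have gj: "?g (cs ! j) w = 1 / H" if j: "j < ?n" for j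
    proof -
      have "?g (cs ! j) w = ?g (cs ! j) (\<lambda>l. (1 / (fst (rs ! j) * H)) * snd (rs ! j) l)"
        using wj[OF j] by (intro gval_cong) simp
      also have "\<dots> = (1 / (fst (rs ! j) * H)) * ?g (cs ! j) (snd (rs ! j))"
        using Dpos[OF j] Hpos node_facts(1)[OF wf dis j] by (intro gval_hom) auto
      also have "\<dots> = 1 / H" using CH(4)[OF j] Dpos[OF j] by simp
      finally show ?thesis .
    qed
    have "(\<lambda>j. ?g (cs ! j) w) ` {..<?n} = (\<lambda>j. 1 / H) ` {..<?n}" using gj by (intro image_cong) auto
    also have "\<dots> = {1 / H}" using CH(2) by auto
    finally have img: "(\<lambda>j. ?g (cs ! j) w) ` {..<?n} = {1 / H}" .
    then have gw: "?g (Node L cs) w = 1 / H"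
      unfolding gval_node_sum img using LQ by simp
    have ub: "?g (Node L cs) w' \<le> 1 / H * sum w' (desc (Node L cs))"
      if nn: "\<forall>l\<in>desc (Node L cs). 0 \<le> w' l" for w'
    proof -
      define t where "t = ?g (Node L cs) w'"
      have tj: "t / fst (rs ! j) \<le> sum w' (desc (cs ! j))" if j: "j < ?n" for j
      proof -
        have nnj: "\<forall>l\<in>desc (cs ! j). 0 \<le> w' l" using nn node_facts(3)[OF wf dis j] by blast
        have "t \<le> ?g (cs ! j) w'" unfolding t_def gval_node_sum using LQ j by simp
        also have "\<dots> \<le> fst (rs ! j) * sum w' (desc (cs ! j))" by (rule CH(5)[OF j nnj])
        finally show ?thesis using Dpos[OF j] by (simp add: divide_le_eq mult.commute)
      qed
      have "t * H = (\<Sum>j<?n. t / fst (rs ! j))" unfolding Hs by (simp add: sum_distrib_left)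
      also have "\<dots> \<le> (\<Sum>j<?n. sum w' (desc (cs ! j)))" using tj by (intro sum_mono) auto
      also have "\<dots> = sum w' (desc (Node L cs))" unfolding sum_desc_node[OF dis] ..
      finally have "t * H \<le> sum w' (desc (Node L cs))" .
      then show ?thesis unfolding t_def using Hpos by (simp add: le_divide_eq)
    qed
    show "w \<in> tsimplex (Node L cs) \<and> ?g (Node L cs) w = 1 / H \<and>
      (\<forall>w'. (\<forall>l\<in>desc (Node L cs). 0 \<le> w' l) \<longrightarrow> ?g (Node L cs) w' \<le> 1 / H * sum w' (desc (Node L cs))) \<and>
      0 \<le> 1 / H"
      using s1 gw ub Hpos by auto
  qed
next
  case (Q_zero L cs rs w)
  show ?case unfolding IHP_def
  proof (intro impI)
    assume wf: "wf_tree (Node L cs)" and dis: "distinct (leaves (Node L cs))"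
      and dp: "\<forall>l\<in>desc (Node L cs). 0 \<le> dleaf d th mu astar l"
    note CH = children_IH[OF Q_zero.IH wf dis dp]
    let ?n = "length cs"
    let ?g = "gval d th mu astar"
    have LQ: "L \<noteq> (if astar then LMAX else LMIN)" using Q_zero.hyps(1) by simp
    obtain j where j: "j < ?n" "fst (rs ! j) = 0"
      using Q_zero.hyps(2) CH(1) by (metis in_set_conv_nth)
    have ub: "?g (Node L cs) w' \<le> 0 * sum w' (desc (Node L cs))"
      if nn: "\<forall>l\<in>desc (Node L cs). 0 \<le> w' l" for w'
    proof -
      have nnj: "\<forall>l\<in>desc (cs ! j). 0 \<le> w' l" using nn node_facts(3)[OF wf dis j(1)] by blast
      have "?g (Node L cs) w' \<le> ?g (cs ! j) w'" unfolding gval_node_sum using LQ j by simp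
      also have "\<dots> \<le> 0" using CH(5)[OF j(1) nnj] j(2) by simp
      finally show ?thesis by simp
    qed
    have wnn: "\<forall>l\<in>desc (Node L cs). 0 \<le> w l" using Q_zero.hyps(3) unfolding tsimplex_def by blast
    have "0 \<le> ?g (Node L cs) w" using gval_nonneg[OF wf] wnn dp by blast
    then have gw: "?g (Node L cs) w = 0" using ub[OF wnn] by simp
    show "w \<in> tsimplex (Node L cs) \<and> ?g (Node L cs) w = 0 \<and>
      (\<forall>w'. (\<forall>l\<in>desc (Node L cs). 0 \<le> w' l) \<longrightarrow> ?g (Node L cs) w' \<le> 0 * sum w' (desc (Node L cs))) \<and>
      0 \<le> (0::real)"
      using Q_zero.hyps(3) gw ub by auto
  qed
qed

lemma val_cong: "(\<forall>l\<in>desc s. lam l = lam' l) \<Longrightarrow> val s lam = val s lam'"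
proof (induction s)
  case (Leaf x) then show ?case by simp
next
  case (Node L cs)
  have m: "map (\<lambda>c. val c lam) cs = map (\<lambda>c. val c lam') cs" using Node by auto
  show ?case by (cases L) (simp_all only: val.simps m)
qed

lemma wins_cong: "(\<forall>l\<in>desc s. lam l = lam' l) \<Longrightarrow> wins th s lam = wins th s lam'"
  unfolding wins_def using val_cong by metis

lemma wins_node:
  assumes "cs \<noteq> []"
  shows "(wins th (Node L cs) lam \<noteq> astar) \<longleftrightarrow> (if L = (if astar then LMAX else LMIN)
     then (\<forall>c\<in>set cs. wins th c lam \<noteq> astar) else (\<exists>c\<in>set cs. wins th c lam \<noteq> astar))"
  using assms by (cases astar; cases L) (auto simp: wins_def Max_less_iff Min_less_iff Min_ge_iff Max_ge_iff not_le)

lemma subtree_facts: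
  "s \<in> subtrees T \<Longrightarrow> wf_tree T \<Longrightarrow> distinct (leaves T) \<Longrightarrow> wf_tree s \<and> distinct (leaves s) \<and> desc s \<subseteq> desc T"
proof (induction T)
  case (Leaf x) then show ?case by simp
next
  case (Node L cs)
  show ?case
  proof (cases "s = Node L cs")
    case True then show ?thesis using Node.prems by simp
  next
    case False
    then obtain c where c: "c \<in> set cs" "s \<in> subtrees c" using Node.prems(1) by auto
    have "distinct (leaves c)" using Node.prems(3) c(1) by (simp add: distinct_concat_iff)
    moreover have "wf_tree c" using Node.prems(2) c(1) by simp
    ultimately have "wf_tree s \<and> distinct (leaves s) \<and> desc s \<subseteq> desc c" using Node.IH[OF c] by blast
    moreover have "desc c \<subseteq> desc (Node L cs)" using c(1) by auto
    ultimately show ?thesis by blast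
  qed
qed

lemma alt_child:
  assumes "lam \<in> Alt X th astar (Node L cs)" "c \<in> set cs" "wins th c lam \<noteq> astar"
  shows "lam \<in> Alt X th astar c"
  using assms unfolding Alt_def by auto

lemma gval_LB:
  assumes ef: "expfam b b' Th" and thX: "th \<in> mean_set b' Th"
  shows "wf_tree s \<Longrightarrow> distinct (leaves s) \<Longrightarrow> \<forall>l\<in>desc s. mu l \<in> mean_set b' Th \<Longrightarrow> \<forall>l\<in>desc s. 0 \<le> w l
    \<Longrightarrow> lam \<in> Alt (mean_set b' Th) th astar s
    \<Longrightarrow> gval (KL b b' Th) th mu astar s w \<le> (\<Sum>l\<in>desc s. w l * KL b b' Th (mu l) (lam l))"
proof (induction s)
  case (Leaf l)
  have lX: "lam l \<in> mean_set b' Th" and wl: "(th \<le> lam l) \<noteq> astar"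
    using Leaf.prems(5) unfolding Alt_def wins_def by auto
  have mX: "mu l \<in> mean_set b' Th" using Leaf.prems(3) by simp
  have w0: "0 \<le> w l" using Leaf.prems(4) by simp
  have "dleaf (KL b b' Th) th mu astar l \<le> KL b b' Th (mu l) (lam l)"
  proof (cases astar)
    case True
    then have "lam l < th" using wl by simp
    then show ?thesis unfolding dleaf_def using True KL_below[OF ef mX lX thX] KL_nonneg[OF ef mX lX] by auto
  next
    case False
    then have "th \<le> lam l" using wl by simp
    then show ?thesis unfolding dleaf_def using False KL_above[OF ef mX thX lX] KL_nonneg[OF ef mX lX] by auto
  qed
  then show ?case using w0 by (simp add: mult_left_mono)
next
  case (Node L cs)
  let ?g = "gval (KL b b' Th) th mu astar"
  let ?S = "\<lambda>A. (\<Sum>l\<in>A. w l * KL b b' Th (mu l) (lam l))"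
  have wf: "wf_tree (Node L cs)" and dis: "distinct (leaves (Node L cs))" using Node.prems by auto
  have cne: "cs \<noteq> []" using wf by simp
  have IHj: "?g (cs ! j) w \<le> ?S (desc (cs ! j))" if j: "j < length cs" and wj: "wins th (cs ! j) lam \<noteq> astar" for j
  proof -
    have c: "cs ! j \<in> set cs" using j by simp
    note nf = node_facts[OF wf dis j]
    show ?thesis
      using Node.IH[OF c nf(1) nf(2)] Node.prems(3,4) nf(3) alt_child[OF Node.prems(5) c wj] by blast
  qed
  have Snn: "0 \<le> w l * KL b b' Th (mu l) (lam l)" if l: "l \<in> desc (Node L cs)" for l
  proof -
    have "mu l \<in> mean_set b' Th" "lam l \<in> mean_set b' Th" "0 \<le> w l"
      using Node.prems(3,4,5) l unfolding Alt_def by blast+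
    then show ?thesis using KL_nonneg[OF ef] by (simp add: mult_nonneg_nonneg)
  qed
  have Ssum: "?S (desc (Node L cs)) = (\<Sum>j<length cs. ?S (desc (cs ! j)))"
    by (rule sum_desc_node[OF dis])
  have wn: "wins th (Node L cs) lam \<noteq> astar" using Node.prems(5) unfolding Alt_def by simp
  show ?case
  proof (cases "L = (if astar then LMAX else LMIN)")
    case True
    have allw: "\<forall>c\<in>set cs. wins th c lam \<noteq> astar" using wins_node[OF cne, of th L lam astar] True wn by simp
    have "?g (Node L cs) w = (\<Sum>j<length cs. ?g (cs ! j) w)" unfolding gval_node_sum using True by simp
    also have "\<dots> \<le> (\<Sum>j<length cs. ?S (desc (cs ! j)))"
      using IHj allw by (intro sum_mono) auto
    finally show ?thesis using Ssum by simp
  next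
    case False
    have "\<exists>c\<in>set cs. wins th c lam \<noteq> astar" using wins_node[OF cne, of th L lam astar] False wn by simp
    then obtain j where j: "j < length cs" "wins th (cs ! j) lam \<noteq> astar" by (metis in_set_conv_nth)
    have "?g (Node L cs) w \<le> ?g (cs ! j) w" unfolding gval_node_sum using False j by simp
    also have "\<dots> \<le> ?S (desc (cs ! j))" by (rule IHj[OF j])
    also have "\<dots> \<le> ?S (desc (Node L cs))"
      using node_facts(3)[OF wf dis j(1)] Snn by (intro sum_mono2) auto
    finally show ?thesis .
  qed
qed

lemma gval_UB:
  assumes ef: "expfam b b' Th" and thX: "th \<in> mean_set b' Th"
  shows "wf_tree s \<Longrightarrow> distinct (leaves s) \<Longrightarrow> \<forall>l\<in>desc s. mu l \<in> mean_set b' Th \<Longrightarrow> \<forall>l\<in>desc s. 0 \<le> w l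
    \<Longrightarrow> 0 < e \<Longrightarrow> \<exists>lam\<in>Alt (mean_set b' Th) th astar s.
       (\<Sum>l\<in>desc s. w l * KL b b' Th (mu l) (lam l)) < gval (KL b b' Th) th mu astar s w + e"
proof (induction s arbitrary: e)
  case (Leaf l)
  have mX: "mu l \<in> mean_set b' Th" using Leaf.prems(3) by simp
  have w0: "0 \<le> w l" using Leaf.prems(4) by simp
  have e0: "0 < e" by (rule Leaf.prems(5))
  have key: "\<exists>y\<in>mean_set b' Th. (th \<le> y) \<noteq> astar \<and>
      w l * KL b b' Th (mu l) y < w l * dleaf (KL b b' Th) th mu astar l + e"
  proof (cases astar)
    case True
    show ?thesis
    proof (cases "th \<le> mu l")
      case True2: True
      have e1: "0 < e / (w l + 1)" using e0 w0 by simp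
      obtain y where y: "y \<in> mean_set b' Th" "y < th" "KL b b' Th (mu l) y < KL b b' Th (mu l) th + e / (w l + 1)"
        using KL_leftcont[OF ef mX thX e1] by blast
      have "w l * KL b b' Th (mu l) y \<le> w l * (KL b b' Th (mu l) th + e / (w l + 1))"
        using y(3) w0 by (intro mult_left_mono) auto
      also have "\<dots> = w l * KL b b' Th (mu l) th + e * (w l / (w l + 1))" by (simp add: algebra_simps)
      also have "\<dots> < w l * KL b b' Th (mu l) th + e * 1"
        using e0 w0 by (intro add_strict_left_mono mult_strict_left_mono) auto
      finally show ?thesis using y True True2 unfolding dleaf_def by (intro bexI[of _ y]) auto
    next
      case False
      then show ?thesis using True mX e0 KL_self unfolding dleaf_def by (intro bexI[of _ "mu l"]) auto
    qed
  next
    case False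
    show ?thesis
    proof (cases "mu l < th")
      case True
      then show ?thesis using False thX e0 unfolding dleaf_def by (intro bexI[of _ th]) auto
    next
      case False2: False
      then show ?thesis using False mX e0 KL_self unfolding dleaf_def by (intro bexI[of _ "mu l"]) auto
    qed
  qed
  then obtain y where y: "y \<in> mean_set b' Th" "(th \<le> y) \<noteq> astar"
      "w l * KL b b' Th (mu l) y < w l * dleaf (KL b b' Th) th mu astar l + e" by blast
  show ?case
    using y by (intro bexI[of _ "\<lambda>_. y"]) (auto simp: Alt_def wins_def)
next
  case (Node L cs)
  let ?g = "gval (KL b b' Th) th mu astar"
  let ?S = "\<lambda>lam A. (\<Sum>l\<in>A. w l * KL b b' Th (mu l) (lam l))"
  let ?A = "Alt (mean_set b' Th) th astar"
  let ?n = "length cs"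
  have wf: "wf_tree (Node L cs)" and dis: "distinct (leaves (Node L cs))" using Node.prems by auto
  have cne: "cs \<noteq> []" using wf by simp
  have IHj: "\<exists>lam\<in>?A (cs ! j). ?S lam (desc (cs ! j)) < ?g (cs ! j) w + e'" if j: "j < ?n" and e': "0 < e'" for j e'
  proof -
    have c: "cs ! j \<in> set cs" using j by simp
    note nf = node_facts[OF wf dis j]
    show ?thesis
      using Node.IH[OF c nf(1) nf(2) _ _ e'] Node.prems(3,4) nf(3) by blast
  qed
  show ?case
  proof (cases "L = (if astar then LMAX else LMIN)")
    case True
    have n0: "0 < ?n" using cne by simp
    have e': "0 < e / ?n" using Node.prems(5) n0 by simp
    have "\<forall>j. \<exists>lam. j < ?n \<longrightarrow> lam \<in> ?A (cs ! j) \<and> ?S lam (desc (cs ! j)) < ?g (cs ! j) w + e / ?n"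
      using IHj[OF _ e'] by blast
    then obtain Lf where Lf: "\<And>j. j < ?n \<Longrightarrow> Lf j \<in> ?A (cs ! j) \<and> ?S (Lf j) (desc (cs ! j)) < ?g (cs ! j) w + e / ?n"
      by metis
    define idx where "idx l = (SOME j. j < ?n \<and> l \<in> desc (cs ! j))" for l
    define lam where "lam l = Lf (idx l) l" for l
    have lamj: "lam l = Lf j l" if j: "j < ?n" and l: "l \<in> desc (cs ! j)" for j l
    proof -
      have "idx l < ?n \<and> l \<in> desc (cs ! idx l)" unfolding idx_def
        by (rule someI_ex[where P="\<lambda>k. k < ?n \<and> l \<in> desc (cs ! k)"]) (use j l in blast)
      then have "idx l = j" using node_disj[OF dis j] l by blast
      then show ?thesis unfolding lam_def by simp
    qed
    have wj: "wins th (cs ! j) lam \<noteq> astar" if j: "j < ?n" for j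
    proof -
      have "wins th (cs ! j) lam = wins th (cs ! j) (Lf j)" using lamj[OF j] by (intro wins_cong) auto
      then show ?thesis using Lf[OF j] unfolding Alt_def by simp
    qed
    have lamX: "\<forall>l\<in>desc (Node L cs). lam l \<in> mean_set b' Th"
    proof
      fix l assume "l \<in> desc (Node L cs)"
      from iffD1[OF desc_node this] obtain j where j: "j < ?n" "l \<in> desc (cs ! j)" by blast
      then show "lam l \<in> mean_set b' Th" using lamj[OF j] Lf[OF j(1)] unfolding Alt_def by simp
    qed
    have "\<forall>c\<in>set cs. wins th c lam \<noteq> astar" using wj by (metis in_set_conv_nth)
    then have "wins th (Node L cs) lam \<noteq> astar" using wins_node[OF cne, of th L lam astar] True by simp
    then have lamA: "lam \<in> ?A (Node L cs)" using lamX unfolding Alt_def by simp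
    have "?S lam (desc (Node L cs)) = (\<Sum>j<?n. ?S lam (desc (cs ! j)))" by (rule sum_desc_node[OF dis])
    also have "\<dots> = (\<Sum>j<?n. ?S (Lf j) (desc (cs ! j)))"
      using lamj by (intro sum.cong refl) auto
    also have "\<dots> < (\<Sum>j<?n. ?g (cs ! j) w + e / ?n)"
      using Lf n0 by (intro sum_strict_mono) auto
    also have "\<dots> = (\<Sum>j<?n. ?g (cs ! j) w) + e" using n0 by (simp add: sum.distrib)
    also have "\<dots> = ?g (Node L cs) w + e" unfolding gval_node_sum using True by simp
    finally show ?thesis using lamA by blast
  next
    case False
    have "?g (Node L cs) w = Min ((\<lambda>j. ?g (cs ! j) w) ` {..<?n})" unfolding gval_node_sum using False by simp
    moreover have "Min ((\<lambda>j. ?g (cs ! j) w) ` {..<?n}) \<in> (\<lambda>j. ?g (cs ! j) w) ` {..<?n}"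
      using cne by (intro Min_in) auto
    ultimately obtain j where j: "j < ?n" "?g (cs ! j) w = ?g (Node L cs) w" by auto
    obtain lj where lj: "lj \<in> ?A (cs ! j)" "?S lj (desc (cs ! j)) < ?g (cs ! j) w + e"
      using IHj[OF j(1) Node.prems(5)] by blast
    define lam where "lam l = (if l \<in> desc (cs ! j) then lj l else mu l)" for l
    have "wins th (cs ! j) lam = wins th (cs ! j) lj" unfolding lam_def by (intro wins_cong) auto
    then have "wins th (cs ! j) lam \<noteq> astar" using lj(1) unfolding Alt_def by simp
    then have "\<exists>c\<in>set cs. wins th c lam \<noteq> astar" using j(1) nth_mem by blast
    then have "wins th (Node L cs) lam \<noteq> astar" using wins_node[OF cne, of th L lam astar] False by simp
    moreover have "\<forall>l\<in>desc (Node L cs). lam l \<in> mean_set b' Th"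
      using lj(1) Node.prems(3) unfolding lam_def Alt_def by auto
    ultimately have lamA: "lam \<in> ?A (Node L cs)" unfolding Alt_def by simp
    have "?S lam (desc (Node L cs)) = ?S lam (desc (cs ! j))"
      using node_facts(3)[OF wf dis j(1)] by (intro sum.mono_neutral_right) (auto simp: lam_def KL_self)
    also have "\<dots> = ?S lj (desc (cs ! j))" unfolding lam_def by (intro sum.cong) auto
    also have "\<dots> < ?g (Node L cs) w + e" using lj(2) j(2) by simp
    finally show ?thesis using lamA by blast
  qed
qed

lemma obj_eq:
  assumes ef: "expfam b b' Th" and thX: "th \<in> mean_set b' Th"
    and "wf_tree s" "distinct (leaves s)" "\<forall>l\<in>desc s. mu l \<in> mean_set b' Th" "\<forall>l\<in>desc s. 0 \<le> w l"
  shows "objective (KL b b' Th) (mean_set b' Th) th astar mu s w = gval (KL b b' Th) th mu astar s w"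
  unfolding objective_def
proof (rule cInf_eq_non_empty)
  show "(\<lambda>lam. \<Sum>l\<in>desc s. w l * KL b b' Th (mu l) (lam l)) ` Alt (mean_set b' Th) th astar s \<noteq> {}"
  proof -
    have "\<exists>lam\<in>Alt (mean_set b' Th) th astar s. (\<Sum>l\<in>desc s. w l * KL b b' Th (mu l) (lam l))
       < gval (KL b b' Th) th mu astar s w + 1"
      by (rule gval_UB[OF ef thX assms(3-6)]) simp
    then show ?thesis by auto
  qed
  fix x assume "x \<in> (\<lambda>lam. \<Sum>l\<in>desc s. w l * KL b b' Th (mu l) (lam l)) ` Alt (mean_set b' Th) th astar s"
  then show "gval (KL b b' Th) th mu astar s w \<le> x"
    using gval_LB[OF ef thX assms(3-6)] by auto
next
  fix y assume H: "\<And>x. x \<in> (\<lambda>lam. \<Sum>l\<in>desc s. w l * KL b b' Th (mu l) (lam l)) ` Alt (mean_set b' Th) th astar s \<Longrightarrow> y \<le> x"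
  show "y \<le> gval (KL b b' Th) th mu astar s w"
  proof (rule ccontr)
    assume "\<not> ?thesis"
    then have "0 < y - gval (KL b b' Th) th mu astar s w" by simp
    then have "\<exists>lam\<in>Alt (mean_set b' Th) th astar s. (\<Sum>l\<in>desc s. w l * KL b b' Th (mu l) (lam l))
       < gval (KL b b' Th) th mu astar s w + (y - gval (KL b b' Th) th mu astar s w)"
      by (rule gval_UB[OF ef thX assms(3-6)])
    then obtain lam where
      "lam \<in> Alt (mean_set b' Th) th astar s"
      "(\<Sum>l\<in>desc s. w l * KL b b' Th (mu l) (lam l)) < y" by auto
    then show False using H by force
  qed
qed

theorem theorem2:
  fixes b b' :: "real \<Rightarrow> real" and Th :: "real set" and th :: real
    and T :: "'l gtree" and mu :: "'l \<Rightarrow> real"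
    and s :: "'l gtree" and ds :: real and ws :: "'l \<Rightarrow> real"
  assumes "expfam b b' Th"
    and "th \<in> mean_set b' Th"
    and "wf_tree T"
    and "distinct (leaves T)"
    and "\<forall>l\<in>desc T. mu l \<in> mean_set b' Th"
    and "s \<in> subtrees T"
    and "rec_dw (KL b b' Th) th mu (wins th T mu) s ds ws"
  shows "ws \<in> tsimplex s
    \<and> objective (KL b b' Th) (mean_set b' Th) th (wins th T mu) mu s ws = ds
    \<and> (\<forall>w\<in>tsimplex s. objective (KL b b' Th) (mean_set b' Th) th (wins th T mu) mu s w \<le> ds)"
proof -
  have sf: "wf_tree s" "distinct (leaves s)" "desc s \<subseteq> desc T"
    using subtree_facts[OF assms(6,3,4)] by auto
  have muX: "\<forall>l\<in>desc s. mu l \<in> mean_set b' Th" using assms(5) sf(3) by blast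
  have dp: "\<forall>l\<in>desc s. 0 \<le> dleaf (KL b b' Th) th mu (wins th T mu) l"
    using muX KL_nonneg[OF assms(1) _ assms(2)] unfolding dleaf_def by auto
  have R: "ws \<in> tsimplex s" "gval (KL b b' Th) th mu (wins th T mu) s ws = ds"
    "\<And>w. \<forall>l\<in>desc s. 0 \<le> w l \<Longrightarrow> gval (KL b b' Th) th mu (wins th T mu) s w \<le> ds * sum w (desc s)"
    using main_rec[OF assms(7)] sf(1,2) dp unfolding IHP_def by blast+
  have O: "objective (KL b b' Th) (mean_set b' Th) th (wins th T mu) mu s w = gval (KL b b' Th) th mu (wins th T mu) s w"
    if "w \<in> tsimplex s" for w
    using obj_eq[OF assms(1,2) sf(1,2) muX] that unfolding tsimplex_def by blast
  show ?thesis
  proof (intro conjI ballI)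
    show "ws \<in> tsimplex s" by (rule R(1))
    show "objective (KL b b' Th) (mean_set b' Th) th (wins th T mu) mu s ws = ds" using O[OF R(1)] R(2) by simp
    fix w assume w: "w \<in> tsimplex s"
    then have wn: "\<forall>l\<in>desc s. 0 \<le> w l" and w1: "sum w (desc s) = 1" unfolding tsimplex_def by auto
    show "objective (KL b b' Th) (mean_set b' Th) th (wins th T mu) mu s w \<le> ds"
      using O[OF w] R(3)[OF wn] w1 by simp
  qed
qed

end
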